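(* Let $\Pi_n$ be a standard PARITY$_n$ program such that no rule $y\leftarrow B$ of $\Pi_n$ has $y\in var(B)$ and every rule body of $\Pi_n$ is consistent. Then there is an almost pure PARITY$_n$ program $\Pi_n'$ with $|\Pi_n'|\le|\Pi_n|$.
   Context: A rule element is one of $\top$, $\bot$, $x$, $not\ x$, $not\ not\ x$, where $x$ is a variable. A (canonical) rule is $H\leftarrow B$ with $H$ a variable or $\bot$ and $B$ a finite set of rule elements; a canonical program is a finite set of rules. For a body $B$, $var(B)=\{e\in B: e\text{ is a variable}\}$. For a set of variables $I$: $I\models\top$; $I\not\models\bot$; $I\models x$ iff $I\models not\ not\ x$ iff $x\in I$; $I\models not\ x$ iff $x\notin I$; $I\models B$ iff $I$ satisfies every element of $B$; $I$ is closed under $H\leftarrow B$ if $I\models B$ implies $I\models H$. The reduct $\Pi^I$ replaces $not\ not\ x$ by $\top$ if $x\in I$ else $\bot$, and $not\ x$ by $\top$ if $x\notin I$ else $\bot$; $I$ is an answer set of $\Pi$ if $I$ is the least set closed under all rules of $\Pi^I$; $Ans(\Pi)$ is the set of answer sets; $var(\Pi)$ the set of variables occurring in $\Pi$; $|\Pi|$ the number of rules. Strings $w\in\{0,1\}^n$ are identified with $\{x_i:w_i=1\}$; PARITY$_n$ is the set of strings in $\{0,1\}^n$ with an odd number of 1's; a PARITY$_n$ program is a canonical program $\Pi$ with $var(\Pi)=\{x_1,\dots,x_n\}$ and $Ans(\Pi)=$ PARITY$_n$. For a set $B$ of rule elements, $S(B)=\{I\subseteq\{x_1,\dots,x_n\}: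 I\models B\}$; $B$ is consistent if $S(B)\neq\emptyset$. $B$ covers a variable $x$ if $x\in B$, $not\ x\in B$ or $not\ not\ x\in B$; $B$ fully covers $\{x_1,\dots,x_n\}$ if it covers every $x_i$. A PARITY$_n$ program $\Pi$ is standard if for every rule $x\leftarrow B\in\Pi$ with head a variable $x$: whenever $S(B\cup\{x\})$ has exactly one element, $not\ not\ x\notin B$. For a program $\Pi$, $F^-(\Pi)$ is the set of rules $H\leftarrow B\in\Pi$ such that $B\cup\{H\}$ does not fully cover $\{x_1,\dots,x_n\}$ (when $H=\bot$, this means $B$ does not fully cover), and $F^+(\Pi)=\Pi\setminus F^-(\Pi)$. An almost pure PARITY$_n$ program is a standard PARITY$_n$ program in which no rule $y\leftarrow B$ has $y\in var(B)$, every rule body is consistent, and every rule $H\leftarrow B\in F^+(\Pi)$ satisfies $var(B)=\emptyset$. *)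

theory Defs
  imports Main
begin

text \<open>Variables are natural numbers; the variable x_i is represented by i.\<close>

datatype elem = Top | Bot | Pos nat | Neg nat | NNeg nat
  (* Top, Bot, x, not x, not not x *)

datatype hd = HVar nat | HBot

datatype rule = Rule (head: hd) (body: "elem set")

type_synonym program = "rule set"

definition canonical :: "program \<Rightarrow> bool" where
  "canonical P \<longleftrightarrow> finite P \<and> (\<forall>r\<in>P. finite (body r))"

definition bvar :: "elem set \<Rightarrow> nat set" where
  "bvar B = {x. Pos x \<in> B}"

fun evars :: "elem \<Rightarrow> nat set" where
  "evars (Pos x) = {x}" | "evars (Neg x) = {x}" | "evars (NNeg x) = {x}"
| "evars Top = {}" | "evars Bot = {}"

fun hvars :: "hd \<Rightarrow> nat set" where
  "hvars (HVar x) = {x}" | "hvars HBot = {}"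

definition pvar :: "program \<Rightarrow> nat set" where
  "pvar P = (\<Union>r\<in>P. hvars (head r) \<union> (\<Union>e\<in>body r. evars e))"

fun sat_elem :: "nat set \<Rightarrow> elem \<Rightarrow> bool" where
  "sat_elem I Top = True"
| "sat_elem I Bot = False"
| "sat_elem I (Pos x) = (x \<in> I)"
| "sat_elem I (NNeg x) = (x \<in> I)"
| "sat_elem I (Neg x) = (x \<notin> I)"

definition sat_body :: "nat set \<Rightarrow> elem set \<Rightarrow> bool" where
  "sat_body I B \<longleftrightarrow> (\<forall>e\<in>B. sat_elem I e)"

fun sat_head :: "nat set \<Rightarrow> hd \<Rightarrow> bool" where
  "sat_head I (HVar x) = (x \<in> I)" | "sat_head I HBot = False"

definition closed_under :: "nat set \<Rightarrow> rule \<Rightarrow> bool" where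
  "closed_under I r \<longleftrightarrow> (sat_body I (body r) \<longrightarrow> sat_head I (head r))"

fun red_elem :: "nat set \<Rightarrow> elem \<Rightarrow> elem" where
  "red_elem I (NNeg x) = (if x \<in> I then Top else Bot)"
| "red_elem I (Neg x) = (if x \<notin> I then Top else Bot)"
| "red_elem I e = e"

definition reduct :: "program \<Rightarrow> nat set \<Rightarrow> program" where
  "reduct P I = (\<lambda>r. Rule (head r) (red_elem I ` body r)) ` P"

definition answer_set :: "program \<Rightarrow> nat set \<Rightarrow> bool" where
  "answer_set P I \<longleftrightarrow>
     (\<forall>r\<in>reduct P I. closed_under I r) \<and>
     (\<forall>J. (\<forall>r\<in>reduct P I. closed_under J r) \<longrightarrow> I \<subseteq> J)"

definition Ans :: "program \<Rightarrow> nat set set" where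
  "Ans P = {I. answer_set P I}"

definition PARITY :: "nat \<Rightarrow> nat set set" where
  "PARITY n = {I. I \<subseteq> {1..n} \<and> odd (card I)}"

definition parity_program :: "nat \<Rightarrow> program \<Rightarrow> bool" where
  "parity_program n P \<longleftrightarrow> canonical P \<and> pvar P = {1..n} \<and> Ans P = PARITY n"

definition S :: "nat \<Rightarrow> elem set \<Rightarrow> nat set set" where
  "S n B = {I. I \<subseteq> {1..n} \<and> sat_body I B}"

definition consistent :: "nat \<Rightarrow> elem set \<Rightarrow> bool" where
  "consistent n B \<longleftrightarrow> S n B \<noteq> {}"

definition covers :: "elem set \<Rightarrow> nat \<Rightarrow> bool" where
  "covers B x \<longleftrightarrow> Pos x \<in> B \<or> Neg x \<in> B \<or> NNeg x \<in> B"

definition fully_covers :: "nat \<Rightarrow> elem set \<Rightarrow> bool" where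
  "fully_covers n B \<longleftrightarrow> (\<forall>i\<in>{1..n}. covers B i)"

definition standard :: "nat \<Rightarrow> program \<Rightarrow> bool" where
  "standard n P \<longleftrightarrow> parity_program n P \<and>
     (\<forall>x B. Rule (HVar x) B \<in> P \<longrightarrow> card (S n (insert (Pos x) B)) = 1 \<longrightarrow> NNeg x \<notin> B)"

text \<open>B \<union> {H} as a set of rule elements (H = bot contributes Bot).\<close>
fun head_elem :: "hd \<Rightarrow> elem" where
  "head_elem (HVar x) = Pos x" | "head_elem HBot = Bot"

definition Fminus :: "nat \<Rightarrow> program \<Rightarrow> program" where
  "Fminus n P = {r\<in>P. \<not> fully_covers n (insert (head_elem (head r)) (body r))}"

definition Fplus :: "nat \<Rightarrow> program \<Rightarrow> program" where
  "Fplus n P = P - Fminus n P"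

definition almost_pure :: "nat \<Rightarrow> program \<Rightarrow> bool" where
  "almost_pure n P \<longleftrightarrow> standard n P \<and>
     (\<forall>y B. Rule (HVar y) B \<in> P \<longrightarrow> y \<notin> bvar B) \<and>
     (\<forall>r\<in>P. consistent n (body r)) \<and>
     (\<forall>r\<in>Fplus n P. bvar (body r) = {})"

end

theory Submission
  imports Defs
begin

fun gel :: "elem \<Rightarrow> elem" where
  "gel (Pos y) = NNeg y" | "gel e = e"

definition fr :: "nat \<Rightarrow> rule \<Rightarrow> rule" where
  "fr n r = (if fully_covers n (insert (head_elem (head r)) (body r))
             then Rule (head r) (gel ` body r) else r)"

definition cl :: "program \<Rightarrow> nat set \<Rightarrow> nat set \<Rightarrow> bool" where
  "cl P I J \<longleftrightarrow> (\<forall>r\<in>P. sat_body J (red_elem I ` body r) \<longrightarrow> sat_head J (head r))"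

lemma answer_set_cl: "answer_set P I \<longleftrightarrow> cl P I I \<and> (\<forall>J. cl P I J \<longrightarrow> I \<subseteq> J)"
proof -
  have "\<And>J. (\<forall>r\<in>reduct P I. closed_under J r) = cl P I J"
    by (auto simp: reduct_def closed_under_def cl_def)
  then show ?thesis by (simp add: answer_set_def)
qed

lemma gel_NNeg: "gel e = NNeg i \<longleftrightarrow> e = Pos i \<or> e = NNeg i" by (cases e) auto
lemma gel_Neg: "gel e = Neg i \<longleftrightarrow> e = Neg i" by (cases e) auto
lemma gel_Pos: "gel e \<noteq> Pos i" by (cases e) auto
lemma gel_evars: "evars (gel e) = evars e" by (cases e) auto
lemma gel_sat: "sat_elem I (gel e) = sat_elem I e" by (cases e) auto

lemma covers_gel: "covers (insert h (gel ` B)) i = covers (insert h B) i"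
proof -
  have a: "Pos i \<notin> gel ` B" using gel_Pos by (metis imageE)
  have b: "Neg i \<in> gel ` B \<longleftrightarrow> Neg i \<in> B" using gel_Neg by (metis image_iff)
  have c: "NNeg i \<in> gel ` B \<longleftrightarrow> NNeg i \<in> B \<or> Pos i \<in> B" using gel_NNeg by (metis image_iff)
  show ?thesis unfolding covers_def using a b c by auto
qed

lemma fully_gel: "fully_covers n (insert h (gel ` B)) = fully_covers n (insert h B)"
  unfolding fully_covers_def using covers_gel by simp

lemma fr_head[simp]: "head (fr n r) = head r" by (simp add: fr_def)

lemma fr_fully: "fully_covers n (insert (head_elem (head (fr n r))) (body (fr n r)))
   = fully_covers n (insert (head_elem (head r)) (body r))"
  by (simp add: fr_def fully_gel)

lemma sat_body_gel: "sat_body I (gel ` B) = sat_body I B"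
  by (simp add: sat_body_def gel_sat)

lemma fr_sat: "sat_body I (body (fr n r)) = sat_body I (body r)"
  by (simp add: fr_def sat_body_gel)

lemma red_self: "sat_elem I (red_elem I e) = sat_elem I e" by (cases e) auto

lemma selfred: "sat_body I (red_elem I ` B) = sat_body I B"
  by (simp add: sat_body_def red_self)

lemma sat_red_mono: "sat_body J (red_elem I ` B) \<Longrightarrow> J \<subseteq> K \<Longrightarrow> sat_body K (red_elem I ` B)"
proof -
  assume a: "sat_body J (red_elem I ` B)" and s: "J \<subseteq> K"
  have "\<And>e. sat_elem J (red_elem I e) \<Longrightarrow> sat_elem K (red_elem I e)"
  proof -
    fix e show "sat_elem J (red_elem I e) \<Longrightarrow> sat_elem K (red_elem I e)"
      using s by (cases e) (auto split: if_splits)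
  qed
  then show ?thesis using a by (auto simp: sat_body_def)
qed

lemma weak: "J \<subseteq> I \<Longrightarrow> sat_body J (red_elem I ` B) \<Longrightarrow> sat_body J (red_elem I ` gel ` B)"
proof -
  assume s: "J \<subseteq> I" and a: "sat_body J (red_elem I ` B)"
  have "\<And>e. sat_elem J (red_elem I e) \<Longrightarrow> sat_elem J (red_elem I (gel e))"
  proof -
    fix e show "sat_elem J (red_elem I e) \<Longrightarrow> sat_elem J (red_elem I (gel e))"
      using s by (cases e) auto
  qed
  then show ?thesis using a by (auto simp: sat_body_def)
qed

lemma fr_weak: "J \<subseteq> I \<Longrightarrow> sat_body J (red_elem I ` body r) \<Longrightarrow> sat_body J (red_elem I ` body (fr n r))"
  by (simp add: fr_def weak)

lemma fr_self: "sat_body I (red_elem I ` body (fr n r)) = sat_body I (red_elem I ` body r)"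
  by (simp add: selfred fr_sat)

lemma sat_head_int: "sat_head J h \<Longrightarrow> sat_head I h \<Longrightarrow> sat_head (J \<inter> I) h"
  by (cases h) auto

lemma ans_fwd:
  assumes "answer_set P I" shows "answer_set (fr n ` P) I"
proof -
  have c: "cl P I I" and m: "\<And>J. cl P I J \<Longrightarrow> I \<subseteq> J" using assms answer_set_cl by auto
  have "cl (fr n ` P) I I" using c fr_self by (auto simp: cl_def)
  moreover have "I \<subseteq> J" if cJ: "cl (fr n ` P) I J" for J
  proof -
    have "cl P I (J \<inter> I)"
      unfolding cl_def
    proof (intro ballI impI)
      fix r assume r: "r \<in> P" and s: "sat_body (J \<inter> I) (red_elem I ` body r)"
      have "sat_body (J \<inter> I) (red_elem I ` body (fr n r))" using fr_weak s by blast
      then have "sat_body J (red_elem I ` body (fr n r))" using sat_red_mono by blast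
      then have h1: "sat_head J (head r)" using cJ r by (auto simp: cl_def)
      have "sat_body I (red_elem I ` body r)" using s sat_red_mono by blast
      then have h2: "sat_head I (head r)" using c r by (auto simp: cl_def)
      show "sat_head (J \<inter> I) (head r)" using sat_head_int h1 h2 by blast
    qed
    then show ?thesis using m by blast
  qed
  ultimately show ?thesis using answer_set_cl by blast
qed

lemma ans_sub_pvar:
  assumes "answer_set P I" shows "I \<subseteq> pvar P"
proof -
  have c: "cl P I I" and m: "\<And>J. cl P I J \<Longrightarrow> I \<subseteq> J" using assms answer_set_cl by auto
  have "cl P I (I \<inter> pvar P)"
    unfolding cl_def
  proof (intro ballI impI)
    fix r assume r: "r \<in> P" and s: "sat_body (I \<inter> pvar P) (red_elem I ` body r)"
    have "sat_body I (red_elem I ` body r)" using s sat_red_mono by blast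
    then have h: "sat_head I (head r)" using c r by (auto simp: cl_def)
    show "sat_head (I \<inter> pvar P) (head r)"
    proof (cases "head r")
      case (HVar x)
      then have "x \<in> pvar P" using r unfolding pvar_def by force
      then show ?thesis using h HVar by simp
    next
      case HBot then show ?thesis using h by simp
    qed
  qed
  then show ?thesis using m by blast
qed

lemma cover_eq: "sat_body K B \<Longrightarrow> sat_body I B \<Longrightarrow> covers B i \<Longrightarrow> (i \<in> K \<longleftrightarrow> i \<in> I)"
  unfolding covers_def sat_body_def by force

lemma sat_minus: "x \<notin> evars e \<Longrightarrow> sat_elem (I - {x}) e = sat_elem I e"
  by (cases e) auto

lemma key_contra:
  assumes st: "standard n P"
    and h2: "\<forall>y B. Rule (HVar y) B \<in> P \<longrightarrow> y \<notin> bvar B"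
    and r: "r \<in> P" and fc: "fully_covers n (insert (Pos x) (body r))"
    and hr: "head r = HVar x" and xI: "x \<in> I" and Isub: "I \<subseteq> {1..n}"
    and ev: "even (card I)" and sI: "sat_body I (body r)"
  shows False
proof -
  define B where "B = body r"
  have rB: "Rule (HVar x) B \<in> P" using r hr B_def by (metis rule.collapse)
  have "S n (insert (Pos x) B) = {I}"
  proof
    show "{I} \<subseteq> S n (insert (Pos x) B)" using Isub xI sI B_def by (auto simp: S_def sat_body_def)
  next
    show "S n (insert (Pos x) B) \<subseteq> {I}"
    proof
      fix K assume "K \<in> S n (insert (Pos x) B)"
      then have K: "K \<subseteq> {1..n}" "x \<in> K" "sat_body K B" by (auto simp: S_def sat_body_def)
      have "i \<in> K \<longleftrightarrow> i \<in> I" for i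
      proof (cases "i \<in> {1..n}")
        case False then show ?thesis using K Isub by blast
      next
        case True
        show ?thesis
        proof (cases "i = x")
          case True then show ?thesis using K xI by simp
        next
          case False
          have "covers (insert (Pos x) B) i" using fc True B_def by (simp add: fully_covers_def)
          then have "covers B i" using False by (simp add: covers_def)
          then show ?thesis using cover_eq K(3) sI B_def by blast
        qed
      qed
      then show "K \<in> {I}" by blast
    qed
  qed
  then have "card (S n (insert (Pos x) B)) = 1" by simp
  then have nn: "NNeg x \<notin> B" using st rB unfolding standard_def by blast
  have np: "Pos x \<notin> B" using h2 rB by (auto simp: bvar_def)
  have ng: "Neg x \<notin> B" using sI xI B_def by (auto simp: sat_body_def)
  have ev2: "x \<notin> evars e" if "e \<in> B" for e
    using that nn np ng by (cases e) auto
  define I' where "I' = I - {x}"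
  have sI': "sat_body I' B" using sI ev2 sat_minus B_def I'_def by (auto simp: sat_body_def)
  have fin: "finite I" using Isub finite_subset by blast
  have "card I' = card I - 1" using fin xI I'_def by simp
  moreover have "card I \<ge> 1" using fin xI by (metis One_nat_def Suc_leI card_gt_0_iff empty_iff)
  ultimately have "odd (card I')" using ev by (simp add: even_diff_nat)
  then have "I' \<in> PARITY n" using Isub I'_def by (auto simp: PARITY_def)
  then have "answer_set P I'" using st by (auto simp: standard_def parity_program_def Ans_def)
  then have "cl P I' I'" using answer_set_cl by blast
  moreover have "sat_body I' (red_elem I' ` body r)" using sI' selfred B_def by blast
  ultimately have "sat_head I' (head r)" using r by (auto simp: cl_def)
  then show False using hr I'_def by simp
qed

lemma ans_bwd:
  assumes st: "standard n P"
    and h2: "\<forall>y B. Rule (HVar y) B \<in> P \<longrightarrow> y \<notin> bvar B"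
    and a: "answer_set (fr n ` P) I"
  shows "I \<in> PARITY n"
proof (rule ccontr)
  assume nI: "I \<notin> PARITY n"
  have pv: "pvar (fr n ` P) = pvar P"
  proof -
    have "hvars (head (fr n r)) \<union> (\<Union>e\<in>body (fr n r). evars e) = hvars (head r) \<union> (\<Union>e\<in>body r. evars e)" for r
      by (simp add: fr_def gel_evars)
    then show ?thesis unfolding pvar_def by simp
  qed
  have Isub: "I \<subseteq> {1..n}" using ans_sub_pvar[OF a] pv st by (simp add: standard_def parity_program_def)
  then have ev: "even (card I)" using nI by (auto simp: PARITY_def)
  have c': "cl (fr n ` P) I I" and m': "\<And>J. cl (fr n ` P) I J \<Longrightarrow> I \<subseteq> J" using a answer_set_cl by auto
  have c: "cl P I I" using c' fr_self by (auto simp: cl_def)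
  have "\<not> answer_set P I" using nI st by (auto simp: standard_def parity_program_def Ans_def)
  then obtain J where cJ: "cl P I J" and nJ: "\<not> I \<subseteq> J" using c answer_set_cl by blast
  have cJ': "cl P I (J \<inter> I)" unfolding cl_def
  proof (intro ballI impI)
    fix r assume r: "r \<in> P" and s: "sat_body (J \<inter> I) (red_elem I ` body r)"
    have "sat_head J (head r)" using r cJ sat_red_mono[OF s] by (auto simp: cl_def)
    moreover have "sat_head I (head r)" using r c sat_red_mono[OF s] by (auto simp: cl_def)
    ultimately show "sat_head (J \<inter> I) (head r)" using sat_head_int by blast
  qed
  have "\<not> cl (fr n ` P) I (J \<inter> I)" using m' nJ by blast
  then obtain r where r: "r \<in> P" and s: "sat_body (J \<inter> I) (red_elem I ` body (fr n r))"
     and nh: "\<not> sat_head (J \<inter> I) (head r)" by (auto simp: cl_def)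
  show False
  proof (cases "fully_covers n (insert (head_elem (head r)) (body r))")
    case False
    then have "fr n r = r" by (simp add: fr_def)
    then show False using cJ' r s nh by (auto simp: cl_def)
  next
    case fc: True
    have sI: "sat_body I (red_elem I ` body (fr n r))" using s sat_red_mono by blast
    then have hI: "sat_head I (head r)" using c' r by (force simp: cl_def)
    then obtain x where hr: "head r = HVar x" and xI: "x \<in> I" by (cases "head r") auto
    have "sat_body I (body r)" using sI fr_self selfred by metis
    then show False using key_contra[OF st h2 r _ hr xI Isub ev] fc hr by simp
  qed
qed

theorem mainTheorem16:
  fixes n :: nat and P :: program
  assumes "standard n P"
    and "\<forall>y B. Rule (HVar y) B \<in> P \<longrightarrow> y \<notin> bvar B"
    and "\<forall>r\<in>P. consistent n (body r)"
  shows "\<exists>P'. almost_pure n P' \<and> card P' \<le> card P"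
proof -
  note st = assms(1)
  have can: "canonical P" using st by (simp add: standard_def parity_program_def)
  then have finP: "finite P" by (simp add: canonical_def)
  define P' where "P' = fr n ` P"
  have can': "canonical P'" using can unfolding canonical_def P'_def by (auto simp: fr_def)
  have pv: "pvar P' = pvar P"
  proof -
    have "hvars (head (fr n r)) \<union> (\<Union>e\<in>body (fr n r). evars e) = hvars (head r) \<union> (\<Union>e\<in>body r. evars e)" for r
      by (simp add: fr_def gel_evars)
    then show ?thesis unfolding pvar_def P'_def by simp
  qed
  have ans: "Ans P' = PARITY n"
  proof
    show "Ans P' \<subseteq> PARITY n" using ans_bwd[OF st assms(2)] by (auto simp: Ans_def P'_def)
    have "Ans P = PARITY n" using st by (simp add: standard_def parity_program_def)
    then show "PARITY n \<subseteq> Ans P'" using ans_fwd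
      by (auto simp: Ans_def P'_def)
  qed
  have pp: "parity_program n P'" using can' pv ans st by (simp add: parity_program_def standard_def)
  have Seq: "S n (insert (Pos x) (body (fr n r))) = S n (insert (Pos x) (body r))" for x r
  proof -
    have "sat_body I (insert (Pos x) (body (fr n r))) = sat_body I (insert (Pos x) (body r))" for I
      using fr_sat[of I n r] by (simp add: sat_body_def)
    then show ?thesis unfolding S_def by blast
  qed
  have stdP: "\<forall>x B. Rule (HVar x) B \<in> P \<longrightarrow> card (S n (insert (Pos x) B)) = 1 \<longrightarrow> NNeg x \<notin> B"
    using st by (simp add: standard_def)
  have std2: "\<forall>x B. Rule (HVar x) B \<in> P' \<longrightarrow> card (S n (insert (Pos x) B)) = 1 \<longrightarrow> NNeg x \<notin> B"
  proof (intro allI impI)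
    fix x B assume m: "Rule (HVar x) B \<in> P'" and c1: "card (S n (insert (Pos x) B)) = 1"
    then obtain r where r: "r \<in> P" and e: "Rule (HVar x) B = fr n r" by (auto simp: P'_def)
    have "head (Rule (HVar x) B) = head (fr n r)" using e by simp
    then have hr: "head r = HVar x" by simp
    have rr: "Rule (HVar x) (body r) \<in> P" using r hr by (metis rule.collapse)
    have Bb: "B = body (fr n r)" proof -
      have "body (Rule (HVar x) B) = body (fr n r)" using e by simp
      then show ?thesis by simp
    qed
    have c2: "card (S n (insert (Pos x) (body r))) = 1" using c1 Seq Bb by simp
    have nn: "NNeg x \<notin> body r" using stdP rr c2 by blast
    have np: "Pos x \<notin> body r" using assms(2) rr by (auto simp: bvar_def)
    show "NNeg x \<notin> B"
    proof (cases "fully_covers n (insert (head_elem (head r)) (body r))")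
      case True
      then have "B = gel ` body r" using Bb by (simp add: fr_def)
      show ?thesis
      proof
        assume "NNeg x \<in> B"
        then obtain e where "e \<in> body r" "gel e = NNeg x" using \<open>B = gel ` body r\<close> by force
        then show False using nn np gel_NNeg by metis
      qed
    next
      case False
      then show ?thesis using Bb nn by (simp add: fr_def)
    qed
  qed
  have std: "standard n P'" using pp std2 by (simp add: standard_def)
  have nb: "\<forall>y B. Rule (HVar y) B \<in> P' \<longrightarrow> y \<notin> bvar B"
  proof (intro allI impI)
    fix y B assume "Rule (HVar y) B \<in> P'"
    then obtain r where r: "r \<in> P" and e: "Rule (HVar y) B = fr n r" by (auto simp: P'_def)
    have "head (Rule (HVar y) B) = head (fr n r)" using e by simp
    then have hr: "head r = HVar y" by simp
    have rr: "Rule (HVar y) (body r) \<in> P" using r hr by (metis rule.collapse)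
    have np: "Pos y \<notin> body r" using assms(2) rr by (auto simp: bvar_def)
    have Bb: "B = body (fr n r)" proof -
      have "body (Rule (HVar y) B) = body (fr n r)" using e by simp
      then show ?thesis by simp
    qed
    have "Pos y \<notin> B"
    proof (cases "fully_covers n (insert (head_elem (head r)) (body r))")
      case True
      then have "B = gel ` body r" using Bb by (simp add: fr_def)
      show ?thesis
      proof
        assume "Pos y \<in> B"
        then obtain e where "gel e = Pos y" using \<open>B = gel ` body r\<close> by force
        then show False using gel_Pos by metis
      qed
    next
      case False
      then show ?thesis using Bb np by (simp add: fr_def)
    qed
    then show "y \<notin> bvar B" by (simp add: bvar_def)
  qed
  have cons: "\<forall>r\<in>P'. consistent n (body r)"
  proof
    fix r' assume "r' \<in> P'"
    then obtain r where r: "r \<in> P" and e: "r' = fr n r" by (auto simp: P'_def)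
    have "S n (body r') = S n (body r)" using e fr_sat unfolding S_def by blast
    then show "consistent n (body r')" using assms(3) r by (simp add: consistent_def)
  qed
  have fp: "\<forall>r\<in>Fplus n P'. bvar (body r) = {}"
  proof
    fix r' assume "r' \<in> Fplus n P'"
    then have m: "r' \<in> P'" and f: "fully_covers n (insert (head_elem (head r')) (body r'))"
      by (auto simp: Fplus_def Fminus_def)
    then obtain r where r: "r \<in> P" and e: "r' = fr n r" by (auto simp: P'_def)
    have "fully_covers n (insert (head_elem (head r)) (body r))" using f e fr_fully by metis
    then have "body r' = gel ` body r" using e by (simp add: fr_def)
    have "Pos y \<notin> body r'" for y
    proof
      assume "Pos y \<in> body r'"
      then obtain e where "gel e = Pos y" using \<open>body r' = gel ` body r\<close> by force
      then show False using gel_Pos by metis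
    qed
    then show "bvar (body r') = {}" unfolding bvar_def by blast
  qed
  have "almost_pure n P'" using std nb cons fp by (simp add: almost_pure_def)
  moreover have "card P' \<le> card P" using finP card_image_le P'_def by blast
  ultimately show ?thesis by blast
qed

end
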